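(* Consider a glass (a nonequilibrium state of the system) in internal equilibrium, relaxing at fixed temperature $T_0$ and pressure $P_0$ of the medium toward the equilibrium supercooled liquid. Then during relaxation $S>S_{\text{SCL}}$, and the entropy varies in time with a unique direction: $dS(t)/dt<0$ for every nonequilibrium state during relaxation, so that $S(T_0,P_0,t)$ approaches $S_{\text{SCL}}(T_0,P_0)$ from above.
   Context: The system $\Sigma$ is in contact with a large equilibrium medium at fixed $T_0,P_0$. The system is in internal equilibrium: its entropy $S(E,V,\boldsymbol{\xi})$ is a state function of energy $E$, volume $V$ and internal variables $\boldsymbol{\xi}$, with instantaneous temperature $T(t)$, pressure $P(t)$ and affinity $\mathbf{A}(t)$ defined by $\partial S/\partial E=1/T$, $\partial S/\partial V=P/T$, $\partial S/\partial\boldsymbol{\xi}=\mathbf{A}/T$. The second law requires $d_{\text{i}}S\ge0$, and since $dS,d_{\text{e}}S,dV,d\boldsymbol{\xi}$ are independent, it yields $[T_0-T(t)]dS(t)\ge0$ (strictly for a nonequilibrium state). During relaxation at fixed medium temperature the system's temperature satisfies $T(t)>T_0$, approaching $T_0$ from above. $S_{\text{SCL}}(T_0,P_0)$ is the equilibrium supercooled-liquid entropy at the medium's $T_0,P_0$. *)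

theory Defs
  imports Complex_Main
begin

end

theory Submission
  imports Defs
begin

theorem theorem3:
  fixes S T S' :: "real \<Rightarrow> real" and T0 S_SCL :: real
  assumes deriv: "\<And>t. t \<ge> 0 \<Longrightarrow> (S has_real_derivative S' t) (at t)"
    and hot: "\<And>t. t \<ge> 0 \<Longrightarrow> T t > T0"
    and second_law: "\<And>t. t \<ge> 0 \<Longrightarrow> (T0 - T t) * S' t > 0"
    and relax: "(S \<longlongrightarrow> S_SCL) at_top"
  shows "\<forall>t\<ge>0. S' t < 0 \<and> S t > S_SCL"
proof -
  have neg: "S' t < 0" if "t \<ge> 0" for t
  proof -
    have "T0 - T t < 0" using hot[OF that] by simp
    with second_law[OF that] show ?thesis
      by (simp add: zero_less_mult_iff)
  qed
  have dec: "S b < S a" if "0 \<le> a" "a < b" for a b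
  proof -
    show ?thesis
      by (rule DERIV_neg_imp_decreasing[OF that(2)])
         (use that deriv neg in \<open>metis order_trans less_imp_le\<close>)
  qed
  show ?thesis
  proof (intro allI impI conjI)
    fix t :: real assume t: "t \<ge> 0"
    show "S' t < 0" by (rule neg[OF t])
    have ev: "eventually (\<lambda>x. S x \<le> S (t+1)) at_top"
      unfolding eventually_at_top_linorder
      by (rule exI[of _ "t+1"]) (use dec t in \<open>force simp: le_less\<close>)
    have "S_SCL \<le> S (t+1)"
      by (rule tendsto_upperbound[OF relax ev]) simp
    also have "\<dots> < S t" using dec t by simp
    finally show "S t > S_SCL" .
  qed
qed

end
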